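(* Let $\beta>2\alpha>0$ with $\beta+2\alpha>1$, let $\varphi_N(x)=\frac12x^TAx-\sum_{k=1}^{s_N}\log\cosh(x^TAe_k)$ for $x\in\mathbb{R}^{s_N}$, and let $x$ be a minimizer of $\varphi_N$. Then $x_k\ge0$ for some $k\in\{1,\dots,s_N\}$ if and only if $x_k\ge0$ for all $k\in\{1,\dots,s_N\}$.
   Context: $A$ is the $s_N\times s_N$ symmetric circulant matrix $A=\beta I+\alpha(P+P^T)$, where $P$ is the cyclic shift matrix (so $A_{kk}=\beta$, $A_{k,k\pm1}=\alpha$ with indices mod $s_N$); $e_k$ are the standard basis vectors of $\mathbb{R}^{s_N}$. *)

theory Defs
  imports Complex_Main
begin

text \<open>The s x s symmetric circulant matrix A = beta I + alpha (P + P^T), P the cyclic shift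
  (P i j = 1 iff j = (i+1) mod s), indices 0..s-1.\<close>
definition circA :: "nat \<Rightarrow> real \<Rightarrow> real \<Rightarrow> nat \<Rightarrow> nat \<Rightarrow> real" where
  "circA s \<alpha> \<beta> i j =
     (if i = j then \<beta> else 0)
     + (if j = (i + 1) mod s then \<alpha> else 0)
     + (if i = (j + 1) mod s then \<alpha> else 0)"

text \<open>phi_N(x) = 1/2 x^T A x - sum_k log cosh (x^T A e_k); vectors in R^s are functions
  nat => real of which only the components below s matter.\<close>
definition phiN :: "nat \<Rightarrow> real \<Rightarrow> real \<Rightarrow> (nat \<Rightarrow> real) \<Rightarrow> real" where
  "phiN s \<alpha> \<beta> x =
     (1/2) * (\<Sum>i<s. \<Sum>j<s. x i * circA s \<alpha> \<beta> i j * x j)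
     - (\<Sum>k<s. ln (cosh (\<Sum>i<s. x i * circA s \<alpha> \<beta> i k)))"

end

theory Submission
  imports Defs
begin
lemma exp_tangent:
  fixes t d :: real assumes "-1 < t" "t < 1"
  shows "exp (t*d) \<le> cosh d + t * sinh d"
proof -
  have e1: "1 + d*(1-t) \<le> exp (d*(1-t))" by (rule exp_ge_add_one_self)
  have e2: "1 - d*(1+t) \<le> exp (-(d*(1+t)))" using exp_ge_add_one_self[of "-(d*(1+t))"] by simp
  have a1: "exp (t*d) * ((1+t)/2) * (1 + d*(1-t)) \<le> exp (t*d) * ((1+t)/2) * exp (d*(1-t))"
    using e1 assms by (intro mult_left_mono) auto
  have a2: "exp (t*d) * ((1-t)/2) * (1 - d*(1+t)) \<le> exp (t*d) * ((1-t)/2) * exp (-(d*(1+t)))"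
    using e2 assms by (intro mult_left_mono) auto
  have b1: "exp (t*d) * exp (d*(1-t)) = exp d" by (simp add: exp_add[symmetric] algebra_simps)
  have b2: "exp (t*d) * exp (-(d*(1+t))) = exp (-d)" by (simp add: exp_add[symmetric] algebra_simps)
  have "cosh d + t * sinh d = ((1+t)/2) * exp d + ((1-t)/2) * exp (-d)"
    by (simp add: cosh_def sinh_def field_simps)
  also have "\<dots> = exp (t*d) * ((1+t)/2) * exp (d*(1-t)) + exp (t*d) * ((1-t)/2) * exp (-(d*(1+t)))"
    using b1 b2 by (simp add: algebra_simps)
  also have "\<dots> \<ge> exp (t*d) * ((1+t)/2) * (1 + d*(1-t)) + exp (t*d) * ((1-t)/2) * (1 - d*(1+t))"
    using a1 a2 by linarith
  also have "exp (t*d) * ((1+t)/2) * (1 + d*(1-t)) + exp (t*d) * ((1-t)/2) * (1 - d*(1+t)) = exp (t*d)"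
    by (simp add: field_simps)
  finally show ?thesis by simp
qed

lemma lncosh_tangent:
  fixes u v :: real
  shows "ln (cosh v) + tanh v * (u - v) \<le> ln (cosh u)"
proof -
  define d where "d = u - v"
  have u: "u = v + d" by (simp add: d_def)
  have c: "cosh u = cosh v * (cosh d + tanh v * sinh d)"
    unfolding u cosh_add tanh_def by (simp add: field_simps)
  have pos: "0 < cosh d + tanh v * sinh d"
    using c cosh_real_pos[of u] cosh_real_pos[of v] by (metis zero_less_mult_pos)
  have "tanh v * d \<le> ln (cosh d + tanh v * sinh d)"
    using exp_tangent[of "tanh v" d] tanh_real_lt_1[of v] tanh_real_gt_neg1[of v] pos
    by (simp add: ln_ge_iff)
  moreover have "ln (cosh u) = ln (cosh v) + ln (cosh d + tanh v * sinh d)"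
    using c pos by (simp add: ln_mult)
  ultimately show ?thesis by (simp add: d_def)
qed

definition Qf :: "nat \<Rightarrow> real \<Rightarrow> real \<Rightarrow> (nat \<Rightarrow> real) \<Rightarrow> (nat \<Rightarrow> real) \<Rightarrow> real" where
  "Qf s a b u v = (\<Sum>i<s. \<Sum>j<s. u i * circA s a b i j * v j)"

definition colf :: "nat \<Rightarrow> real \<Rightarrow> real \<Rightarrow> (nat \<Rightarrow> real) \<Rightarrow> nat \<Rightarrow> real" where
  "colf s a b u k = (\<Sum>i<s. u i * circA s a b i k)"

lemma circA_sym: "circA s a b i j = circA s a b j i"
  unfolding circA_def by auto

lemma circA_nonneg: "0 \<le> a \<Longrightarrow> 0 \<le> b \<Longrightarrow> 0 \<le> circA s a b i j"
  unfolding circA_def by auto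

lemma Qf_sym: "Qf s a b u v = Qf s a b v u"
  unfolding Qf_def
  by (subst sum.swap) (simp add: circA_sym[of s a b] mult.commute mult.left_commute)

lemma Qf_col: "Qf s a b u v = (\<Sum>k<s. v k * colf s a b u k)"
  unfolding Qf_def colf_def
  by (subst sum.swap) (simp add: sum_distrib_left mult.commute mult.left_commute)

lemma Qf_diff: "Qf s a b (\<lambda>i. u i - v i) (\<lambda>i. u i - v i) = Qf s a b u u - 2 * Qf s a b u v + Qf s a b v v"
proof -
  have "Qf s a b (\<lambda>i. u i - v i) (\<lambda>i. u i - v i) = Qf s a b u u - Qf s a b u v - Qf s a b v u + Qf s a b v v"
    unfolding Qf_def by (simp add: algebra_simps sum_subtractf sum.distrib)
  then show ?thesis using Qf_sym[of s a b v u] by simp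
qed

lemma phiN_Qf: "phiN s a b x = (1/2) * Qf s a b x x - (\<Sum>k<s. ln (cosh (colf s a b x k)))"
  unfolding phiN_def Qf_def colf_def by simp


lemma sum_shift_mod:
  fixes f :: "nat \<Rightarrow> real"
  assumes "s \<ge> 1"
  shows "(\<Sum>i<s. f ((i+1) mod s)) = (\<Sum>i<s. f i)"
proof -
  obtain n where n: "s = Suc n" using assms by (cases s) auto
  have "(\<Sum>i<Suc n. f ((i+1) mod Suc n)) = (\<Sum>i<n. f ((i+1) mod Suc n)) + f 0"
    by (simp add: sum.lessThan_Suc)
  also have "(\<Sum>i<n. f ((i+1) mod Suc n)) = (\<Sum>i<n. f (Suc i))"
    by (intro sum.cong) auto
  also have "(\<Sum>i<n. f (Suc i)) + f 0 = (\<Sum>i<Suc n. f i)"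
    by (subst sum.lessThan_Suc_shift) simp
  finally show ?thesis using n by simp
qed

lemma Qf_form:
  assumes "s \<ge> 1"
  shows "Qf s a b u u = b * (\<Sum>i<s. u i ^ 2) + 2 * a * (\<Sum>i<s. u i * u ((i+1) mod s))"
proof -
  have inner: "(\<Sum>j<s. u i * circA s a b i j * u j) =
      b * u i ^ 2 + a * (u i * u ((i+1) mod s)) + a * (\<Sum>j<s. if i = (j+1) mod s then u i * u j else 0)"
    if "i < s" for i
  proof -
    have m: "(i+1) mod s < s" using assms by simp
    have "(\<Sum>j<s. u i * circA s a b i j * u j) =
       (\<Sum>j<s. (if i = j then b * (u i * u j) else 0)) + (\<Sum>j<s. if j = (i+1) mod s then a * (u i * u j) else 0)
       + (\<Sum>j<s. if i = (j+1) mod s then a * (u i * u j) else 0)"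
      unfolding circA_def sum.distrib[symmetric] by (intro sum.cong) (auto simp: algebra_simps)
    also have "\<dots> = b * u i ^ 2 + a * (u i * u ((i+1) mod s)) + a * (\<Sum>j<s. if i = (j+1) mod s then u i * u j else 0)"
      using that m by (simp add: sum.delta sum.delta' power2_eq_square sum_distrib_left if_distrib cong: if_cong)
    finally show ?thesis .
  qed
  have swap: "(\<Sum>i<s. \<Sum>j<s. if i = (j+1) mod s then u i * u j else 0) = (\<Sum>j<s. u j * u ((j+1) mod s))"
  proof -
    have "(\<Sum>i<s. \<Sum>j<s. if i = (j+1) mod s then u i * u j else 0) = (\<Sum>j<s. \<Sum>i<s. if i = (j+1) mod s then u i * u j else 0)"
      by (rule sum.swap)
    also have "\<dots> = (\<Sum>j<s. u ((j+1) mod s) * u j)"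
      using assms by (intro sum.cong) (auto simp: sum.delta')
    finally show ?thesis by (simp add: mult.commute)
  qed
  have "Qf s a b u u = (\<Sum>i<s. b * u i ^ 2 + a * (u i * u ((i+1) mod s)) + a * (\<Sum>j<s. if i = (j+1) mod s then u i * u j else 0))"
    unfolding Qf_def by (intro sum.cong) (auto simp: inner)
  also have "\<dots> = b * (\<Sum>i<s. u i ^ 2) + a * (\<Sum>i<s. u i * u ((i+1) mod s)) + a * (\<Sum>i<s. \<Sum>j<s. if i = (j+1) mod s then u i * u j else 0)"
    by (simp add: sum.distrib sum_distrib_left)
  also have "\<dots> = b * (\<Sum>i<s. u i ^ 2) + 2 * a * (\<Sum>i<s. u i * u ((i+1) mod s))"
    unfolding swap by simp
  finally show ?thesis .
qed

lemma Qf_pd: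
  assumes "s \<ge> 1" "a \<ge> 0"
  shows "Qf s a b u u \<ge> (b - 2 * a) * (\<Sum>i<s. u i ^ 2)"
proof -
  have "(\<Sum>i<s. u i * u ((i+1) mod s)) \<ge> (\<Sum>i<s. - (u i ^ 2 + u ((i+1) mod s) ^ 2) / 2)"
  proof (intro sum_mono)
    fix i show "- (u i ^ 2 + u ((i+1) mod s) ^ 2) / 2 \<le> u i * u ((i+1) mod s)"
      using sum_squares_ge_zero[of "u i + u ((i+1) mod s)" 0]
      by (simp add: power2_eq_square algebra_simps)
  qed
  also have "(\<Sum>i<s. - (u i ^ 2 + u ((i+1) mod s) ^ 2) / 2) = - (\<Sum>i<s. u i ^ 2)"
  proof -
    have h1: "(\<Sum>i<s. - (u i ^ 2 + u ((i+1) mod s) ^ 2) / 2) = - ((\<Sum>i<s. u i ^ 2) + (\<Sum>i<s. u ((i+1) mod s) ^ 2)) / 2"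
      by (simp only: sum_divide_distrib[symmetric] sum_negf sum.distrib)
    have h2: "(\<Sum>i<s. u ((i+1) mod s) ^ 2) = (\<Sum>i<s. u i ^ 2)"
      by (rule sum_shift_mod[OF assms(1), of "\<lambda>i. u i ^ 2"])
    have h3: "\<And>S::real. - (S + S) / 2 = - S" by simp
    show ?thesis unfolding h1 h2 by (rule h3)
  qed
  finally have "(\<Sum>i<s. u i * u ((i+1) mod s)) \<ge> - (\<Sum>i<s. u i ^ 2)" .
  then have "2 * a * (\<Sum>i<s. u i * u ((i+1) mod s)) \<ge> 2 * a * (- (\<Sum>i<s. u i ^ 2))"
    using assms(2) by (intro mult_left_mono) simp_all
  moreover have "Qf s a b u u = b * (\<Sum>i<s. u i ^ 2) + 2 * a * (\<Sum>i<s. u i * u ((i+1) mod s))"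
    by (rule Qf_form[OF assms(1)])
  ultimately show ?thesis by (simp only: left_diff_distrib)
qed


definition Jf :: "real \<Rightarrow> real" where "Jf v = v * tanh v - ln (cosh v)"

definition Gf :: "nat \<Rightarrow> real \<Rightarrow> real \<Rightarrow> (nat \<Rightarrow> real) \<Rightarrow> real" where
  "Gf s a b w = (1/2) * Qf s a b (\<lambda>k. tanh (w k)) (\<lambda>k. tanh (w k)) - (\<Sum>k<s. Jf (w k))"

lemma L1:
  "phiN s a b z = - Gf s a b (colf s a b z)
     + (1/2) * Qf s a b (\<lambda>i. z i - tanh (colf s a b z i)) (\<lambda>i. z i - tanh (colf s a b z i))"
proof -
  define t where "t = (\<lambda>k. tanh (colf s a b z k))"
  have lc: "ln (cosh (colf s a b z k)) = t k * colf s a b z k - Jf (colf s a b z k)" for k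
    unfolding t_def Jf_def by (simp add: mult.commute)
  have "(\<Sum>k<s. ln (cosh (colf s a b z k))) = (\<Sum>k<s. t k * colf s a b z k) - (\<Sum>k<s. Jf (colf s a b z k))"
    unfolding lc by (simp add: sum_subtractf)
  also have "(\<Sum>k<s. t k * colf s a b z k) = Qf s a b z t" by (simp add: Qf_col)
  finally have e: "(\<Sum>k<s. ln (cosh (colf s a b z k))) = Qf s a b z t - (\<Sum>k<s. Jf (colf s a b z k))" .
  have d: "Qf s a b (\<lambda>i. z i - t i) (\<lambda>i. z i - t i) = Qf s a b z z - 2 * Qf s a b z t + Qf s a b t t"
    by (rule Qf_diff)
  show ?thesis
    using d unfolding phiN_Qf e Gf_def t_def by (simp add: algebra_simps)
qed

lemma L2:
  "phiN s a b (\<lambda>k. tanh (w k)) \<le> - Gf s a b w"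
proof -
  define t where "t = (\<lambda>k. tanh (w k))"
  have "(\<Sum>k<s. ln (cosh (colf s a b t k))) \<ge> (\<Sum>k<s. ln (cosh (w k)) + tanh (w k) * (colf s a b t k - w k))"
    by (intro sum_mono lncosh_tangent)
  also have "(\<Sum>k<s. ln (cosh (w k)) + tanh (w k) * (colf s a b t k - w k))
      = (\<Sum>k<s. t k * colf s a b t k) - (\<Sum>k<s. Jf (w k))"
    unfolding t_def Jf_def by (simp add: sum_subtractf[symmetric] algebra_simps)
  also have "(\<Sum>k<s. t k * colf s a b t k) = Qf s a b t t" by (simp add: Qf_col)
  finally have "Qf s a b t t - (\<Sum>k<s. Jf (w k)) \<le> (\<Sum>k<s. ln (cosh (colf s a b t k)))" .
  then show ?thesis unfolding phiN_Qf Gf_def t_def[symmetric] by simp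
qed

lemma Jf_abs: "Jf \<bar>v\<bar> = Jf v"
  unfolding Jf_def by (cases "v \<ge> 0") auto

lemma L3:
  assumes "a \<ge> 0" "b \<ge> 0"
  shows "Gf s a b w \<le> Gf s a b (\<lambda>k. \<bar>w k\<bar>)"
proof -
  have "Qf s a b (\<lambda>k. tanh (w k)) (\<lambda>k. tanh (w k)) \<le> Qf s a b (\<lambda>k. \<bar>tanh (w k)\<bar>) (\<lambda>k. \<bar>tanh (w k)\<bar>)"
    unfolding Qf_def
  proof (intro sum_mono)
    fix i j
    have c: "0 \<le> circA s a b i j" using circA_nonneg assms by blast
    have "tanh (w i) * circA s a b i j * tanh (w j) \<le> \<bar>tanh (w i) * circA s a b i j * tanh (w j)\<bar>" by simp
    also have "\<dots> = \<bar>tanh (w i)\<bar> * circA s a b i j * \<bar>tanh (w j)\<bar>" using c by (simp add: abs_mult)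
    finally show "tanh (w i) * circA s a b i j * tanh (w j) \<le> \<bar>tanh (w i)\<bar> * circA s a b i j * \<bar>tanh (w j)\<bar>" .
  qed
  then show ?thesis unfolding Gf_def by (simp add: Jf_abs)
qed

lemma phiN_cong: assumes "\<And>k. k < s \<Longrightarrow> u k = v k" shows "phiN s a b u = phiN s a b v"
proof -
  have A: "(\<Sum>i<s. \<Sum>j<s. u i * circA s a b i j * u j) = (\<Sum>i<s. \<Sum>j<s. v i * circA s a b i j * v j)"
    by (intro sum.cong refl) (simp add: assms)
  have B: "(\<Sum>k<s. ln (cosh (\<Sum>i<s. u i * circA s a b i k))) = (\<Sum>k<s. ln (cosh (\<Sum>i<s. v i * circA s a b i k)))"
    by (intro sum.cong refl arg_cong[where f="\<lambda>x. ln (cosh x)"]) (simp add: assms)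
  show ?thesis unfolding phiN_def A B ..
qed

lemma minimizer_fix:
  assumes s: "s \<ge> 1" and ab: "b > 2 * a" "a > 0"
    and min: "\<forall>y. phiN s a b z \<le> phiN s a b y"
  shows "(\<forall>k<s. z k = tanh (colf s a b z k)) \<and> (\<forall>y. phiN s a b (\<lambda>k. \<bar>z k\<bar>) \<le> phiN s a b y)"
proof -
  define w where "w = colf s a b z"
  define q where "q = Qf s a b (\<lambda>i. z i - tanh (w i)) (\<lambda>i. z i - tanh (w i))"
  have e1: "phiN s a b z = - Gf s a b w + (1/2) * q" unfolding q_def w_def by (rule L1)
  have e2: "phiN s a b (\<lambda>k. tanh \<bar>w k\<bar>) \<le> - Gf s a b (\<lambda>k. \<bar>w k\<bar>)" by (rule L2)
  have e3: "Gf s a b w \<le> Gf s a b (\<lambda>k. \<bar>w k\<bar>)" using ab by (intro L3) auto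
  have e4: "phiN s a b z \<le> phiN s a b (\<lambda>k. tanh \<bar>w k\<bar>)" using min by blast
  have qle: "q \<le> 0" using e1 e2 e3 e4 by linarith
  have pd: "q \<ge> (b - 2*a) * (\<Sum>i<s. (z i - tanh (w i)) ^ 2)"
    unfolding q_def by (rule Qf_pd[OF s]) (use ab in simp)
  have sq: "(\<Sum>i<s. (z i - tanh (w i)) ^ 2) \<ge> 0" by (intro sum_nonneg) auto
  have "(b - 2*a) * (\<Sum>i<s. (z i - tanh (w i)) ^ 2) \<le> 0" using pd qle by linarith
  then have "(\<Sum>i<s. (z i - tanh (w i)) ^ 2) \<le> 0" using ab sq
    by (metis diff_gt_0_iff_gt mult_pos_pos not_le order_le_less)
  then have "(\<Sum>i<s. (z i - tanh (w i)) ^ 2) = 0" using sq by linarith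
  then have fx: "\<forall>k<s. z k = tanh (w k)"
    by (subst (asm) sum_nonneg_eq_0_iff) auto
  have "(b - 2*a) * (\<Sum>i<s. (z i - tanh (w i)) ^ 2) \<ge> 0" using sq ab by (intro mult_nonneg_nonneg) simp_all
  then have q0: "q \<ge> 0" using pd by linarith
  have "phiN s a b (\<lambda>k. \<bar>z k\<bar>) = phiN s a b (\<lambda>k. tanh \<bar>w k\<bar>)"
    using fx by (intro phiN_cong) auto
  also have "\<dots> \<le> phiN s a b z" using e1 e2 e3 q0 by linarith
  finally have "\<forall>y. phiN s a b (\<lambda>k. \<bar>z k\<bar>) \<le> phiN s a b y" using min by (meson order_trans)
  with fx show ?thesis unfolding w_def by blast
qed


lemma circA_next: "0 \<le> a \<Longrightarrow> 0 \<le> b \<Longrightarrow> a \<le> circA s a b ((k+1) mod s) k"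
  unfolding circA_def by auto

theorem lemma4p4:
  fixes s :: nat and \<alpha> \<beta> :: real and x :: "nat \<Rightarrow> real"
  assumes "s \<ge> 1"
    and "\<beta> > 2 * \<alpha>" and "2 * \<alpha> > 0" and "\<beta> + 2 * \<alpha> > 1"
    and "\<forall>y. phiN s \<alpha> \<beta> x \<le> phiN s \<alpha> \<beta> y"
  shows "(\<exists>k<s. x k \<ge> 0) \<longleftrightarrow> (\<forall>k<s. x k \<ge> 0)"
proof -
  have a0: "\<alpha> > 0" using assms(3) by simp
  have b0: "\<beta> > 0" using assms(2) a0 by simp
  note m1 = minimizer_fix[OF assms(1) assms(2) a0 assms(5)]
  have fx1: "\<forall>k<s. x k = tanh (colf s \<alpha> \<beta> x k)" using m1 by blast
  have min2: "\<forall>y. phiN s \<alpha> \<beta> (\<lambda>k. \<bar>x k\<bar>) \<le> phiN s \<alpha> \<beta> y" using m1 by blast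
  have fx2: "\<forall>k<s. \<bar>x k\<bar> = tanh (colf s \<alpha> \<beta> (\<lambda>k. \<bar>x k\<bar>) k)"
    using minimizer_fix[OF assms(1) assms(2) a0 min2] by blast
  have step: "x ((k+1) mod s) \<ge> 0" if k: "k < s" "x k \<ge> 0" for k
  proof (rule ccontr)
    assume neg: "\<not> x ((k+1) mod s) \<ge> 0"
    define W where "W = colf s \<alpha> \<beta> x k"
    define V where "V = colf s \<alpha> \<beta> (\<lambda>k. \<bar>x k\<bar>) k"
    have "tanh W = tanh V" using fx1 fx2 k unfolding W_def V_def by (metis abs_of_nonneg)
    then have WV: "W = V" by simp
    have sk: "(k+1) mod s < s" using assms(1) by simp
    have "V - W = (\<Sum>i<s. (\<bar>x i\<bar> - x i) * circA s \<alpha> \<beta> i k)"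
      unfolding V_def W_def colf_def by (simp add: sum_subtractf[symmetric] left_diff_distrib)
    also have "\<dots> \<ge> (\<bar>x ((k+1) mod s)\<bar> - x ((k+1) mod s)) * circA s \<alpha> \<beta> ((k+1) mod s) k"
      by (rule member_le_sum) (use sk a0 b0 circA_nonneg in \<open>auto intro!: mult_nonneg_nonneg\<close>)
    finally have "V - W \<ge> (\<bar>x ((k+1) mod s)\<bar> - x ((k+1) mod s)) * circA s \<alpha> \<beta> ((k+1) mod s) k" .
    moreover have "(\<bar>x ((k+1) mod s)\<bar> - x ((k+1) mod s)) * circA s \<alpha> \<beta> ((k+1) mod s) k > 0"
      using neg circA_next[of \<alpha> \<beta> s k] a0 b0 by (intro mult_pos_pos) auto
    ultimately show False using WV by simp
  qed
  have all: "x ((k0 + n) mod s) \<ge> 0" if "k0 < s" "x k0 \<ge> 0" for k0 n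
  proof (induction n)
    case 0 then show ?case using that by simp
  next
    case (Suc n)
    have "x (((k0 + n) mod s + 1) mod s) \<ge> 0"
      using step[of "(k0 + n) mod s"] Suc assms(1) by simp
    moreover have "((k0 + n) mod s + 1) mod s = (k0 + Suc n) mod s" by (simp add: mod_Suc_eq)
    ultimately show ?case by simp
  qed
  show ?thesis
  proof
    assume "\<exists>k<s. x k \<ge> 0"
    then obtain k0 where k0: "k0 < s" "x k0 \<ge> 0" by blast
    show "\<forall>k<s. x k \<ge> 0"
    proof (intro allI impI)
      fix j assume j: "j < s"
      have "(k0 + (s + j - k0)) mod s = j" using k0 j by simp
      then show "x j \<ge> 0" using all[OF k0, of "s + j - k0"] by simp
    qed
  next
    assume "\<forall>k<s. x k \<ge> 0"
    then show "\<exists>k<s. x k \<ge> 0" using assms(1) by (metis less_le_trans zero_less_one)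
  qed
qed

end
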